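(* Fix an integer $n\ge 1$. For every classical strategy $h$, the expected score satisfies $V(\mathcal{F}_{\mathrm{BV}},h)\le \frac{1}{2^n-1}$, and this value is attained; hence $V(\mathcal{F}_{\mathrm{BV}},C)=\max_{h\in C}V(\mathcal{F}_{\mathrm{BV}},h)=\frac{1}{2^n-1}$. Moreover $V(\mathcal{F}_{\mathrm{BV}},Q)=\sup_{h\in Q}V(\mathcal{F}_{\mathrm{BV}},h)=1$, so that \[ \frac{V(\mathcal{F}_{\mathrm{BV}},Q)}{V(\mathcal{F}_{\mathrm{BV}},C)}=2^n-1 . \]
   Context: Let $\omega=\{0,1\}^n$. For $u\in\omega\setminus\{0^n\}$ and $b\in\{0,1\}$ let $S_{u,b}=\{x\in\omega : u\cdot x\equiv b \pmod 2\}$ (so $|S_{u,b}|=2^{n-1}$), and let $\mathcal{F}_{\mathrm{BV}}=\{S_{u,b}\}$, a family of $2(2^n-1)$ subsets. For a nonempty $S\subset\omega$, the subset state is $|S\rangle=|S|^{-1/2}\sum_{x\in S}|x\rangle$ on $n$ qubits. In the complement sampling game, a set $S$ is drawn uniformly at random from $\mathcal{F}_{\mathrm{BV}}$, the player receives one copy of $|S\rangle$ and outputs $y\in\omega$; the strategy is described by the conditional distribution $h(y\mid S)$. The score is $\sigma(S,y)=+1$ if $y\in\bar S=\omega\setminus S$ and $\sigma(S,y)=-1$ otherwise, and the expected score is $V(\mathcal{F}_{\mathrm{BV}},h)=\mathbb{E}_{S\sim\mathrm{Unif}(\mathcal{F}_{\mathrm{BV}})}\mathbb{E}_{y\sim h(\cdot\mid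 S)}[\sigma(S,y)]$. A quantum strategy (set $Q$) may apply any quantum operation to $|S\rangle$ (with ancillas) followed by any measurement yielding $y$. A classical strategy (set $C$) first measures $|S\rangle$ in the computational basis, obtaining $x$ uniformly distributed on $S$, and then outputs $y$ according to an arbitrary (possibly randomized) rule $h(y\mid x)$ depending only on $x$, so that $h(y\mid S)=\sum_{x}h(y\mid x)\,|\langle x|S\rangle|^2$. *)

theory Defs
  imports Complex_Main
begin

definition omega :: "nat \<Rightarrow> bool list set" where
  "omega n = {x. length x = n}"

definition bdot :: "bool list \<Rightarrow> bool list \<Rightarrow> bool" where
  "bdot u x = odd (\<Sum>i<length u. (if u ! i \<and> x ! i then 1 else 0 :: nat))"

definition Sub :: "nat \<Rightarrow> bool list \<Rightarrow> bool \<Rightarrow> bool list set" where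
  "Sub n u b = {x \<in> omega n. bdot u x = b}"

definition FBV :: "nat \<Rightarrow> bool list set set" where
  "FBV n = {Sub n u b | u b. u \<in> omega n \<and> u \<noteq> replicate n False}"

text \<open>Amplitudes of the subset state |S> in the computational basis.\<close>
definition ket :: "bool list set \<Rightarrow> bool list \<Rightarrow> complex" where
  "ket S x = (if x \<in> S then complex_of_real (1 / sqrt (real (card S))) else 0)"

definition score :: "nat \<Rightarrow> bool list set \<Rightarrow> bool list \<Rightarrow> real" where
  "score n S y = (if y \<in> omega n - S then 1 else -1)"

definition V :: "nat \<Rightarrow> (bool list set \<Rightarrow> bool list \<Rightarrow> real) \<Rightarrow> real" where
  "V n h = (\<Sum>S\<in>FBV n. \<Sum>y\<in>omega n. h S y * score n S y) / real (card (FBV n))"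

text \<open>Classical strategies: measure in the computational basis, then apply
  an arbitrary randomized rule g(y|x) (a stochastic kernel on omega).\<close>
definition stochastic :: "nat \<Rightarrow> (bool list \<Rightarrow> bool list \<Rightarrow> real) \<Rightarrow> bool" where
  "stochastic n g \<longleftrightarrow> (\<forall>x\<in>omega n. (\<forall>y\<in>omega n. 0 \<le> g x y) \<and> (\<Sum>y\<in>omega n. g x y) = 1)"

definition classical :: "nat \<Rightarrow> (bool list set \<Rightarrow> bool list \<Rightarrow> real) set" where
  "classical n = {h. \<exists>g. stochastic n g \<and>
      h = (\<lambda>S y. \<Sum>x\<in>omega n. g x y * (cmod (ket S x))\<^sup>2)}"

text \<open>Quantum strategies: any quantum operation followed by a measurement with
  outcomes in omega is equivalent (Stinespring/Naimark) to a POVM {E_y} on the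
  n-qubit space; operators are matrices indexed by omega.\<close>
definition psd :: "nat \<Rightarrow> (bool list \<Rightarrow> bool list \<Rightarrow> complex) \<Rightarrow> bool" where
  "psd n A \<longleftrightarrow> (\<forall>v. let q = (\<Sum>x\<in>omega n. \<Sum>x'\<in>omega n. cnj (v x) * A x x' * v x')
                      in Im q = 0 \<and> 0 \<le> Re q)"

definition povm :: "nat \<Rightarrow> (bool list \<Rightarrow> bool list \<Rightarrow> bool list \<Rightarrow> complex) \<Rightarrow> bool" where
  "povm n E \<longleftrightarrow> (\<forall>y\<in>omega n. psd n (E y)) \<and>
     (\<forall>x\<in>omega n. \<forall>x'\<in>omega n. (\<Sum>y\<in>omega n. E y x x') = (if x = x' then 1 else 0))"

definition quantum :: "nat \<Rightarrow> (bool list set \<Rightarrow> bool list \<Rightarrow> real) set" where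
  "quantum n = {h. \<exists>E. povm n E \<and>
      h = (\<lambda>S y. Re (\<Sum>x\<in>omega n. \<Sum>x'\<in>omega n. cnj (ket S x) * E y x x' * ket S x'))}"

end

theory Submission
  imports Defs
begin


lemma omega_eq: "omega n = {xs. set xs \<subseteq> (UNIV::bool set) \<and> length xs = n}"
  by (auto simp: omega_def)

lemma finite_omega[simp]: "finite (omega n)"
  unfolding omega_eq by (rule finite_lists_length_eq) simp

lemma card_omega: "card (omega n) = 2 ^ n"
  unfolding omega_eq by (subst card_lists_length_eq) (simp_all add: card_UNIV_bool)

lemma bdot_sym: "length u = length x \<Longrightarrow> bdot u x = bdot x u"
  unfolding bdot_def by (simp add: conj_commute)

lemma bdot_flip:
  assumes j: "j < length u" and lx: "length x = length u"
  shows "bdot (u[j := \<not> u!j]) x = (bdot u x \<noteq> x!j)"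
proof -
  let ?t = "\<lambda>v i. (if v ! i \<and> x ! i then 1 else 0 :: nat)"
  have A: "finite {..<length u}" "j \<in> {..<length u}" using j by auto
  have s1: "(\<Sum>i<length u. ?t (u[j := \<not> u!j]) i) = ?t (u[j := \<not> u!j]) j + (\<Sum>i\<in>{..<length u} - {j}. ?t (u[j := \<not> u!j]) i)"
    by (rule sum.remove[OF A])
  have s2: "(\<Sum>i<length u. ?t u i) = ?t u j + (\<Sum>i\<in>{..<length u} - {j}. ?t u i)"
    by (rule sum.remove[OF A])
  have s3: "(\<Sum>i\<in>{..<length u} - {j}. ?t (u[j := \<not> u!j]) i) = (\<Sum>i\<in>{..<length u} - {j}. ?t u i)"
    by (rule sum.cong) auto
  show ?thesis unfolding bdot_def using s1 s2 s3 j by auto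
qed

lemma half_card:
  assumes j: "j < n" and P: "\<And>u. u \<in> omega n \<Longrightarrow> P (u[j := \<not> u!j]) = (\<not> P u)"
  shows "card {u \<in> omega n. P u} = 2 ^ (n - 1)"
proof -
  let ?f = "\<lambda>u::bool list. u[j := \<not> u!j]"
  have ff: "?f (?f u) = u" for u by (cases "j < length u") (auto simp: list_update_beyond)
  have fo: "u \<in> omega n \<Longrightarrow> ?f u \<in> omega n" for u by (simp add: omega_def)
  have "bij_betw ?f {u \<in> omega n. P u} {u \<in> omega n. \<not> P u}"
    apply (rule bij_betw_byWitness[where f' = ?f])
    using ff fo P by auto
  hence e: "card {u \<in> omega n. P u} = card {u \<in> omega n. \<not> P u}" by (rule bij_betw_same_card)
  have "card {u \<in> omega n. P u} + card {u \<in> omega n. \<not> P u} = card (omega n)"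
    by (subst card_Un_disjoint[symmetric]) (auto intro!: arg_cong[where f=card])
  hence "2 * card {u \<in> omega n. P u} = 2 ^ n" using e card_omega by simp
  moreover have "(2::nat) ^ n = 2 * 2 ^ (n - 1)" using j by (cases n) auto
  ultimately show ?thesis by simp
qed

abbreviation zv :: "nat \<Rightarrow> bool list" where "zv n \<equiv> replicate n False"

lemma zv_omega[simp]: "zv n \<in> omega n" by (simp add: omega_def)

lemma bdot_zero[simp]: "length u = n \<Longrightarrow> bdot u (zv n) = False"
  unfolding bdot_def by (auto intro!: sum.neutral simp: nth_replicate)

lemma bdot_unit:
  assumes "length u = n" "j < n"
  shows "bdot u ((zv n)[j := True]) = u ! j"
  using bdot_flip[of j "zv n" u] bdot_sym assms by simp

lemma nonzero_ex: "u \<in> omega n \<Longrightarrow> u \<noteq> zv n \<Longrightarrow> \<exists>j<n. u ! j"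
  by (auto simp: omega_def list_eq_iff_nth_eq)

lemma card_Sub:
  assumes "u \<in> omega n" "u \<noteq> zv n"
  shows "card (Sub n u b) = 2 ^ (n - 1)"
proof -
  obtain j where j: "j < n" "u ! j" using nonzero_ex assms by blast
  have "card {x \<in> omega n. bdot u x = b} = 2 ^ (n - 1)"
  proof (rule half_card[OF j(1)])
    fix x assume x: "x \<in> omega n"
    have "bdot u (x[j := \<not> x!j]) = bdot (x[j := \<not> x!j]) u"
      using assms x by (intro bdot_sym) (auto simp: omega_def)
    also have "\<dots> = (bdot x u \<noteq> u ! j)"
      using assms x j by (intro bdot_flip) (auto simp: omega_def)
    also have "bdot x u = bdot u x" using assms x by (intro bdot_sym) (auto simp: omega_def)
    finally show "(bdot u (x[j := \<not> x!j]) = b) = (\<not> bdot u x = b)" using j by auto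
  qed
  thus ?thesis by (simp add: Sub_def)
qed

lemma Sub_inj: "inj_on (\<lambda>(u,b). Sub n u b) (omega n \<times> UNIV)"
proof (rule inj_onI, clarsimp)
  fix u b u' b' assume u: "u \<in> omega n" and u': "u' \<in> omega n" and e: "Sub n u b = Sub n u' b'"
  have "zv n \<in> Sub n u b \<longleftrightarrow> zv n \<in> Sub n u' b'" using e by simp
  hence bb: "b = b'" using u u' by (simp add: Sub_def omega_def)
  have "u ! j = u' ! j" if j: "j < n" for j
  proof -
    have m: "(zv n)[j := True] \<in> omega n" by (simp add: omega_def)
    have "(zv n)[j := True] \<in> Sub n u b \<longleftrightarrow> (zv n)[j := True] \<in> Sub n u' b'" using e by simp
    thus ?thesis using m bdot_unit[of u n j] bdot_unit[of u' n j] u u' j bb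
      by (auto simp: Sub_def omega_def)
  qed
  moreover have "length u = n" "length u' = n" using u u' by (auto simp: omega_def)
  ultimately show "u = u' \<and> b = b'" using bb by (auto intro: nth_equalityI)
qed

definition UU :: "nat \<Rightarrow> bool list set" where "UU n = omega n - {zv n}"

lemma FBV_img: "FBV n = (\<lambda>(u,b). Sub n u b) ` (UU n \<times> UNIV)"
  by (auto simp: FBV_def UU_def)

lemma card_UU: "card (UU n) = 2 ^ n - 1"
  by (simp add: UU_def card_omega)

lemma card_FBV: "card (FBV n) = 2 * (2 ^ n - 1)"
proof -
  have "inj_on (\<lambda>(u,b). Sub n u b) (UU n \<times> UNIV)"
    by (rule inj_on_subset[OF Sub_inj]) (auto simp: UU_def)
  hence "card (FBV n) = card (UU n \<times> (UNIV::bool set))" unfolding FBV_img by (rule card_image)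
  thus ?thesis by (simp add: card_cartesian_product card_UU card_UNIV_bool)
qed

lemma sum_FBV: "(\<Sum>S\<in>FBV n. F S) = (\<Sum>u\<in>UU n. F (Sub n u True) + F (Sub n u False))"
proof -
  have "inj_on (\<lambda>(u,b). Sub n u b) (UU n \<times> UNIV)"
    by (rule inj_on_subset[OF Sub_inj]) (auto simp: UU_def)
  hence "(\<Sum>S\<in>FBV n. F S) = (\<Sum>p\<in>UU n \<times> UNIV. F (case p of (u,b) \<Rightarrow> Sub n u b))"
    unfolding FBV_img by (simp add: sum.reindex)
  also have "\<dots> = (\<Sum>u\<in>UU n. \<Sum>b\<in>UNIV. F (Sub n u b))"
    by (simp add: sum.cartesian_product split_def)
  also have "\<dots> = (\<Sum>u\<in>UU n. F (Sub n u True) + F (Sub n u False))"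
    by (simp add: UNIV_bool add.commute)
  finally show ?thesis .
qed

lemma Sub_sub: "Sub n u b \<subseteq> omega n" by (auto simp: Sub_def)

lemma FBV_props: "S \<in> FBV n \<Longrightarrow> S \<subseteq> omega n \<and> card S = 2 ^ (n - 1)"
  unfolding FBV_def using Sub_sub card_Sub by blast


lemma cmod_ket: "finite S \<Longrightarrow> S \<noteq> {} \<Longrightarrow> (cmod (ket S x))\<^sup>2 = (if x \<in> S then 1 / real (card S) else 0)"
  by (auto simp: ket_def power_divide card_gt_0_iff norm_divide)

lemma bdot_zv1[simp]: "bdot (zv n) x = False"
  unfolding bdot_def by (auto intro!: sum.neutral simp: nth_replicate)



lemma c_sum:
  assumes x: "x \<in> omega n" and y: "y \<in> omega n"
  shows "(\<Sum>u\<in>UU n. (if bdot u x = bdot u y then -1 else 1::real)) = (if x = y then 1 - 2 ^ n else 1)"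
proof (cases "x = y")
  case True
  have "(\<Sum>u\<in>UU n. (if bdot u x = bdot u y then -1 else 1::real)) = - real (card (UU n))"
    using True by simp
  also have "real (card (UU n)) = 2 ^ n - 1" unfolding card_UU
    by (simp add: of_nat_diff)
  finally show ?thesis using True by simp
next
  case False
  have lx: "length x = n" and ly: "length y = n" using x y by (auto simp: omega_def)
  have "\<exists>j<n. x ! j \<noteq> y ! j" using False lx ly by (auto simp: list_eq_iff_nth_eq)
  then obtain j where j: "j < n" "x ! j \<noteq> y ! j" by blast
  have fl: "bdot (u[j := \<not> u!j]) x = (bdot u x \<noteq> x!j)" "bdot (u[j := \<not> u!j]) y = (bdot u y \<noteq> y!j)"
    if "u \<in> omega n" for u
    using bdot_flip[of j u x] bdot_flip[of j u y] that lx ly j by (auto simp: omega_def)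
  have c1: "card {u \<in> omega n. bdot u x = bdot u y} = 2 ^ (n - 1)"
  proof (rule half_card[OF j(1)])
    fix u assume "u \<in> omega n" 
    from fl[OF this] j(2) show "(bdot (u[j := \<not> u!j]) x = bdot (u[j := \<not> u!j]) y) = (\<not> bdot u x = bdot u y)"
      by (cases "bdot u x"; cases "bdot u y"; cases "x!j"; cases "y!j") simp_all
  qed
  have c2: "card {u \<in> omega n. bdot u x \<noteq> bdot u y} = 2 ^ (n - 1)"
  proof (rule half_card[OF j(1)])
    fix u assume "u \<in> omega n" 
    from fl[OF this] j(2) show "(bdot (u[j := \<not> u!j]) x \<noteq> bdot (u[j := \<not> u!j]) y) = (\<not> bdot u x \<noteq> bdot u y)"
      by (cases "bdot u x"; cases "bdot u y"; cases "x!j"; cases "y!j") simp_all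
  qed
  have "(\<Sum>u\<in>omega n. (if bdot u x = bdot u y then -1 else 1::real))
      = (\<Sum>u\<in>omega n \<inter> {u. bdot u x = bdot u y}. -1) + (\<Sum>u\<in>omega n \<inter> - {u. bdot u x = bdot u y}. 1)"
    by (rule sum.If_cases) simp
  also have "omega n \<inter> {u. bdot u x = bdot u y} = {u \<in> omega n. bdot u x = bdot u y}" by auto
  also have "omega n \<inter> - {u. bdot u x = bdot u y} = {u \<in> omega n. bdot u x \<noteq> bdot u y}" by auto
  finally have "(\<Sum>u\<in>omega n. (if bdot u x = bdot u y then -1 else 1::real)) = 0"
    using c1 c2 by simp
  moreover have "(\<Sum>u\<in>omega n. (if bdot u x = bdot u y then -1 else 1::real))
     = (if bdot (zv n) x = bdot (zv n) y then -1 else 1) + (\<Sum>u\<in>UU n. (if bdot u x = bdot u y then -1 else 1::real))"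
    unfolding UU_def by (rule sum.remove) auto
  ultimately show ?thesis using False by simp
qed


lemma pw:
  assumes "x \<in> omega n" "y \<in> omega n"
  shows "(if x \<in> Sub n u True then K else 0) * score n (Sub n u True) y
       + (if x \<in> Sub n u False then K else 0) * score n (Sub n u False) y
       = K * (if bdot u x = bdot u y then -1 else 1::real)"
  using assms by (auto simp: Sub_def score_def)

lemma UU_FBV: "u \<in> UU n \<Longrightarrow> Sub n u b \<in> FBV n"
  by (auto simp: UU_def FBV_def)

lemma real_card_FBV: "real (card (FBV n)) = 2 * (2 ^ n - 1)"
  by (simp add: card_FBV of_nat_diff)

lemma V_classical:
  assumes n: "n \<ge> 1" and g: "stochastic n g"
  shows "V n (\<lambda>S y. \<Sum>x\<in>omega n. g x y * (cmod (ket S x))\<^sup>2) = (1 - (\<Sum>x\<in>omega n. g x x)) / (2 ^ n - 1)"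
proof -
  define h where "h = (\<lambda>S y. \<Sum>x\<in>omega n. g x y * (cmod (ket S x))\<^sup>2)"
  define K :: real where "K = 1 / 2 ^ (n - 1)"
  define N :: real where "N = 2 ^ n"
  define G where "G = (\<Sum>x\<in>omega n. g x x)"
  define T where "T = (\<lambda>S. \<Sum>y\<in>omega n. h S y * score n S y)"
  define s where "s = (\<lambda>u x y. if bdot u x = bdot u y then -1 else 1::real)"
  have KN: "K * N = 2" unfolding K_def N_def using n
    by (cases n) (auto simp: power_Suc)
  have hS: "h S y = (\<Sum>x\<in>omega n. g x y * (if x \<in> S then K else 0))" if "S \<in> FBV n" for S y
  proof -
    have S: "S \<subseteq> omega n" "card S = 2 ^ (n - 1)" using FBV_props[OF that] by auto
    hence "finite S" "S \<noteq> {}" using finite_subset by fastforce+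
    thus ?thesis unfolding h_def using S
      by (intro sum.cong refl) (simp add: cmod_ket K_def)
  qed
  have TU: "T (Sub n u True) + T (Sub n u False) = K * (\<Sum>x\<in>omega n. \<Sum>y\<in>omega n. g x y * s u x y)"
    if u: "u \<in> UU n" for u
  proof -
    have "T (Sub n u True) + T (Sub n u False)
      = (\<Sum>y\<in>omega n. \<Sum>x\<in>omega n. g x y * ((if x \<in> Sub n u True then K else 0) * score n (Sub n u True) y
       + (if x \<in> Sub n u False then K else 0) * score n (Sub n u False) y))"
      unfolding T_def hS[OF UU_FBV[OF u]] sum.distrib[symmetric] sum_distrib_right
      by (intro sum.cong refl) (simp add: algebra_simps sum.distrib)
    also have "\<dots> = (\<Sum>y\<in>omega n. \<Sum>x\<in>omega n. K * (g x y * s u x y))"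
      by (intro sum.cong refl) (simp add: pw s_def)
    also have "\<dots> = K * (\<Sum>x\<in>omega n. \<Sum>y\<in>omega n. g x y * s u x y)"
      by (subst sum.swap) (simp add: sum_distrib_left)
    finally show ?thesis .
  qed
  have "(\<Sum>S\<in>FBV n. T S) = (\<Sum>u\<in>UU n. K * (\<Sum>x\<in>omega n. \<Sum>y\<in>omega n. g x y * s u x y))"
    unfolding sum_FBV by (intro sum.cong refl TU)
  also have "\<dots> = K * (\<Sum>x\<in>omega n. \<Sum>y\<in>omega n. \<Sum>u\<in>UU n. g x y * s u x y)"
  proof -
    have "(\<Sum>u\<in>UU n. \<Sum>x\<in>omega n. \<Sum>y\<in>omega n. g x y * s u x y)
        = (\<Sum>x\<in>omega n. \<Sum>u\<in>UU n. \<Sum>y\<in>omega n. g x y * s u x y)"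
      by (rule sum.swap)
    also have "\<dots> = (\<Sum>x\<in>omega n. \<Sum>y\<in>omega n. \<Sum>u\<in>UU n. g x y * s u x y)"
      by (intro sum.cong refl sum.swap)
    finally show ?thesis by (simp only: sum_distrib_left[symmetric])
  qed
  also have "\<dots> = K * (\<Sum>x\<in>omega n. \<Sum>y\<in>omega n. g x y * (if x = y then 1 - N else 1))"
    by (intro arg_cong[where f="\<lambda>t. K * t"] sum.cong refl)
       (simp add: sum_distrib_left[symmetric] s_def c_sum N_def)
  also have "\<dots> = K * (\<Sum>x\<in>omega n. 1 - N * g x x)"
  proof (intro arg_cong[where f="\<lambda>t. K * t"] sum.cong refl)
    fix x assume x: "x \<in> omega n"
    have "(\<Sum>y\<in>omega n. g x y * (if x = y then 1 - N else 1))
       = (\<Sum>y\<in>omega n. g x y - (if y = x then N * g x x else 0))"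
      by (intro sum.cong refl) (auto simp: algebra_simps)
    also have "\<dots> = (\<Sum>y\<in>omega n. g x y) - N * g x x"
      using x by (simp add: sum_subtractf)
    also have "(\<Sum>y\<in>omega n. g x y) = 1" using g x by (simp add: stochastic_def)
    finally show "(\<Sum>y\<in>omega n. g x y * (if x = y then 1 - N else 1)) = 1 - N * g x x" .
  qed
  also have "\<dots> = K * (N - N * G)"
    by (simp add: sum_subtractf sum_distrib_left[symmetric] G_def card_omega N_def)
  also have "\<dots> = 2 - 2 * G" using KN by (simp add: algebra_simps)
  finally have tot: "(\<Sum>S\<in>FBV n. T S) = 2 - 2 * G" .
  have "V n h = (2 - 2 * G) / (2 * (2 ^ n - 1))"
    unfolding V_def tot[unfolded T_def] real_card_FBV ..
  also have "\<dots> = (1 - G) / (2 ^ n - 1)"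
  proof -
    have "(2::real) ^ n \<ge> 2" using n by (metis power_one_right power_increasing one_le_numeral)
    thus ?thesis by (simp add: field_simps)
  qed
  finally show ?thesis unfolding h_def G_def .
qed


lemma FBV_fin: "S \<in> FBV n \<Longrightarrow> finite S \<and> S \<noteq> {} \<and> S \<subseteq> omega n \<and> card S = 2 ^ (n - 1)"
proof -
  assume "S \<in> FBV n"
  from FBV_props[OF this] have S: "S \<subseteq> omega n" "card S = 2 ^ (n - 1)" by auto
  hence "finite S" "S \<noteq> {}" using finite_subset by fastforce+
  with S show ?thesis by auto
qed

lemma sum_ket:
  assumes "S \<in> FBV n"
  shows "(\<Sum>x\<in>omega n. cnj (ket S x) * ket S x) = 1"
proof -
  from FBV_fin[OF assms] have S: "finite S" "S \<noteq> {}" "S \<subseteq> omega n" by auto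
  have "(\<Sum>x\<in>omega n. cnj (ket S x) * ket S x) = (\<Sum>x\<in>omega n. of_real ((cmod (ket S x))\<^sup>2))"
    by (intro sum.cong refl) (simp only: complex_norm_square mult.commute)
  also have "\<dots> = of_real (\<Sum>x\<in>omega n. (if x \<in> S then 1 / real (card S) else 0))"
    using S by (simp add: cmod_ket)
  also have "(\<Sum>x\<in>omega n. (if x \<in> S then 1 / real (card S) else 0)) = real (card (omega n \<inter> S)) / real (card S)"
    by (subst sum.inter_restrict[symmetric]) simp_all
  also have "omega n \<inter> S = S" using S by auto
  finally show ?thesis using S by (simp add: card_gt_0_iff)
qed

lemma quantum_props:
  assumes h: "h \<in> quantum n" and S: "S \<in> FBV n"
  shows "(\<forall>y\<in>omega n. 0 \<le> h S y) \<and> (\<Sum>y\<in>omega n. h S y) = 1"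
proof -
  obtain E where E: "povm n E" and hE: "h = (\<lambda>S y. Re (\<Sum>x\<in>omega n. \<Sum>x'\<in>omega n. cnj (ket S x) * E y x x' * ket S x'))"
    using h unfolding quantum_def by blast
  have nn: "\<forall>y\<in>omega n. 0 \<le> h S y"
    using E unfolding povm_def psd_def hE by (auto simp: Let_def)
  have "(\<Sum>y\<in>omega n. \<Sum>x\<in>omega n. \<Sum>x'\<in>omega n. cnj (ket S x) * E y x x' * ket S x')
      = (\<Sum>x\<in>omega n. \<Sum>x'\<in>omega n. \<Sum>y\<in>omega n. cnj (ket S x) * E y x x' * ket S x')"
    by (subst sum.swap) (intro sum.cong refl sum.swap)
  also have "\<dots> = (\<Sum>x\<in>omega n. \<Sum>x'\<in>omega n. cnj (ket S x) * (\<Sum>y\<in>omega n. E y x x') * ket S x')"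
    by (simp add: sum_distrib_left sum_distrib_right)
  also have "\<dots> = (\<Sum>x\<in>omega n. \<Sum>x'\<in>omega n. cnj (ket S x) * (if x = x' then 1 else 0) * ket S x')"
    using E unfolding povm_def by (intro sum.cong refl) auto
  also have "\<dots> = (\<Sum>x\<in>omega n. cnj (ket S x) * ket S x)"
  proof (intro sum.cong refl)
    fix x assume x: "x \<in> omega n"
    have "(\<Sum>x'\<in>omega n. cnj (ket S x) * (if x = x' then 1 else 0) * ket S x')
       = (\<Sum>x'\<in>omega n. if x = x' then cnj (ket S x) * ket S x' else 0)"
      by (intro sum.cong refl) auto
    also have "\<dots> = cnj (ket S x) * ket S x" using x by (simp add: sum.delta)
    finally show "(\<Sum>x'\<in>omega n. cnj (ket S x) * (if x = x' then 1 else 0) * ket S x') = cnj (ket S x) * ket S x" .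
  qed
  also have "\<dots> = 1" by (rule sum_ket[OF S])
  finally have "(\<Sum>y\<in>omega n. h S y) = 1" unfolding hE by (simp flip: Re_sum)
  with nn show ?thesis by blast
qed

lemma V_quantum_le:
  assumes h: "h \<in> quantum n" and n: "n \<ge> 1"
  shows "V n h \<le> 1"
proof -
  have "(\<Sum>y\<in>omega n. h S y * score n S y) \<le> 1" if S: "S \<in> FBV n" for S
  proof -
    have "(\<Sum>y\<in>omega n. h S y * score n S y) \<le> (\<Sum>y\<in>omega n. h S y)"
      using quantum_props[OF h S] by (intro sum_mono) (auto simp: score_def)
    thus ?thesis using quantum_props[OF h S] by simp
  qed
  hence "(\<Sum>S\<in>FBV n. \<Sum>y\<in>omega n. h S y * score n S y) \<le> (\<Sum>S\<in>FBV n. 1)"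
    by (intro sum_mono)
  also have "\<dots> = real (card (FBV n))" by simp
  finally show ?thesis unfolding V_def
    by (cases "card (FBV n) = 0") (simp_all add: divide_le_eq)
qed


definition ww :: "nat \<Rightarrow> bool list \<Rightarrow> bool list \<Rightarrow> real" where
  "ww n y x = 2 / 2 ^ n - (if x = y then 1 else 0)"

definition E0 :: "nat \<Rightarrow> bool list \<Rightarrow> bool list \<Rightarrow> bool list \<Rightarrow> complex" where
  "E0 n y x x' = complex_of_real (ww n y x * ww n y x')"

lemma w_orth:
  assumes x: "x \<in> omega n" and x': "x' \<in> omega n"
  shows "(\<Sum>y\<in>omega n. ww n y x * ww n y x') = (if x = x' then 1 else 0)"
proof -
  define a :: real where "a = 2 / 2 ^ n"
  have "(\<Sum>y\<in>omega n. ww n y x * ww n y x')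
     = (\<Sum>y\<in>omega n. a * a - (if y = x then a else 0) - (if y = x' then a else 0)
          + (if y = x then (if x = x' then 1 else 0) else 0))"
    by (intro sum.cong refl) (auto simp: ww_def a_def algebra_simps)
  also have "\<dots> = real (card (omega n)) * (a * a) - a - a + (if x = x' then 1 else 0)"
    using x x' by (simp add: sum.distrib sum_subtractf sum.delta)
  also have "real (card (omega n)) * (a * a) = 2 * a"
    by (simp add: card_omega a_def power2_eq_square[symmetric] power_divide)
       (simp add: power2_eq_square)
  finally show ?thesis by simp
qed

lemma povm_E0: "povm n (E0 n)"
  unfolding povm_def
proof (intro conjI ballI)
  fix y assume "y \<in> omega n"
  show "psd n (E0 n y)" unfolding psd_def Let_def
  proof
    fix v :: "bool list \<Rightarrow> complex"
    define Z where "Z = (\<Sum>x\<in>omega n. of_real (ww n y x) * v x)"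
    have "(\<Sum>x\<in>omega n. \<Sum>x'\<in>omega n. cnj (v x) * E0 n y x x' * v x') = cnj Z * Z"
      unfolding Z_def cnj_sum sum_product
      by (intro sum.cong refl) (simp add: E0_def algebra_simps)
    also have "\<dots> = of_real ((cmod Z)\<^sup>2)" by (simp only: complex_norm_square mult.commute)
    finally show "Im (\<Sum>x\<in>omega n. \<Sum>x'\<in>omega n. cnj (v x) * E0 n y x x' * v x') = 0 \<and>
        0 \<le> Re (\<Sum>x\<in>omega n. \<Sum>x'\<in>omega n. cnj (v x) * E0 n y x x' * v x')" by simp
  qed
next
  fix x x' assume x: "x \<in> omega n" and x': "x' \<in> omega n"
  have "(\<Sum>y\<in>omega n. E0 n y x x') = of_real (\<Sum>y\<in>omega n. ww n y x * ww n y x')"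
    by (simp add: E0_def)
  also have "\<dots> = (if x = x' then 1 else 0)" using w_orth[OF x x'] by simp
  finally show "(\<Sum>y\<in>omega n. E0 n y x x') = (if x = x' then 1 else 0)" .
qed

definition h0 :: "nat \<Rightarrow> bool list set \<Rightarrow> bool list \<Rightarrow> real" where
  "h0 n = (\<lambda>S y. Re (\<Sum>x\<in>omega n. \<Sum>x'\<in>omega n. cnj (ket S x) * E0 n y x x' * ket S x'))"

lemma h0_quantum: "h0 n \<in> quantum n"
  unfolding quantum_def h0_def using povm_E0 by blast

lemma h0_zero:
  assumes S: "S \<in> FBV n" and y: "y \<in> S" and n: "n \<ge> 1"
  shows "h0 n S y = 0"
proof -
  from FBV_fin[OF S] have S': "finite S" "S \<noteq> {}" "S \<subseteq> omega n" "card S = 2 ^ (n - 1)" by auto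
  define c where "c = real (card S)"
  have c: "c = 2 ^ n / 2" unfolding c_def S'(4) using n by (cases n) auto
  have cp: "c > 0" using S' by (simp add: c_def card_gt_0_iff)
  define Z where "Z = (\<Sum>x\<in>omega n. of_real (ww n y x) * ket S x)"
  have "(\<Sum>x\<in>omega n. ww n y x * (if x \<in> S then 1 / sqrt c else 0))
      = (\<Sum>x\<in>omega n. (if x \<in> S then 2 / 2 ^ n / sqrt c else 0) - (if x = y then 1 / sqrt c else 0))"
    using y by (intro sum.cong refl) (auto simp: ww_def diff_divide_distrib)
  also have "\<dots> = (\<Sum>x\<in>omega n. (if x \<in> S then 2 / 2 ^ n / sqrt c else 0)) - 1 / sqrt c"
    using y S' by (subst sum_subtractf) (auto simp: sum.delta)
  also have "(\<Sum>x\<in>omega n. (if x \<in> S then 2 / 2 ^ n / sqrt c else 0)) = c * (2 / 2 ^ n / sqrt c)"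
    by (subst sum.inter_restrict[symmetric]) (use S' in \<open>simp_all add: c_def Int_absorb1\<close>)
  also have "c * (2 / 2 ^ n / sqrt c) = 1 / sqrt c" using c cp by (simp add: field_simps)
  finally have r0: "(\<Sum>x\<in>omega n. ww n y x * (if x \<in> S then 1 / sqrt c else 0)) = 0" by simp
  have "Z = of_real (\<Sum>x\<in>omega n. ww n y x * (if x \<in> S then 1 / sqrt c else 0))"
    unfolding Z_def by (auto simp: ket_def c_def intro!: sum.cong)
  hence Z0: "Z = 0" using r0 by simp
  have "(\<Sum>x\<in>omega n. \<Sum>x'\<in>omega n. cnj (ket S x) * E0 n y x x' * ket S x')
      = (\<Sum>x\<in>omega n. cnj (ket S x) * of_real (ww n y x)) * Z"
    unfolding Z_def sum_product
    by (intro sum.cong refl) (simp add: E0_def algebra_simps)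
  thus ?thesis unfolding h0_def using Z0 by simp
qed

lemma V_h0:
  assumes n: "n \<ge> 1"
  shows "V n (h0 n) = 1"
proof -
  have "(\<Sum>y\<in>omega n. h0 n S y * score n S y) = 1" if S: "S \<in> FBV n" for S
  proof -
    have "(\<Sum>y\<in>omega n. h0 n S y * score n S y) = (\<Sum>y\<in>omega n. h0 n S y)"
      using h0_zero[OF S _ n] by (intro sum.cong refl) (auto simp: score_def)
    thus ?thesis using quantum_props[OF h0_quantum S] by simp
  qed
  hence "(\<Sum>S\<in>FBV n. \<Sum>y\<in>omega n. h0 n S y * score n S y) = real (card (FBV n))"
    by simp
  moreover have "real (card (FBV n)) > 0" unfolding real_card_FBV using n
    by (simp add: one_less_power)
  ultimately show ?thesis unfolding V_def by simp
qed


definition g0 :: "bool list \<Rightarrow> bool list \<Rightarrow> real" where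
  "g0 x y = (if y = x[0 := \<not> x ! 0] then 1 else 0)"

lemma g0_stoch: "stochastic n g0"
  unfolding stochastic_def
proof (rule ballI, rule conjI)
  fix x assume x: "x \<in> omega n"
  show "\<forall>y\<in>omega n. 0 \<le> g0 x y" by (simp add: g0_def)
  have "x[0 := \<not> x ! 0] \<in> omega n" using x by (simp add: omega_def)
  thus "(\<Sum>y\<in>omega n. g0 x y) = 1" unfolding g0_def by (simp add: sum.delta')
qed

lemma g0_diag: "x \<in> omega n \<Longrightarrow> n \<ge> 1 \<Longrightarrow> g0 x x = 0"
proof -
  assume x: "x \<in> omega n" and n: "n \<ge> 1"
  hence l: "0 < length x" by (simp add: omega_def)
  hence "x[0 := \<not> x ! 0] ! 0 \<noteq> x ! 0" by simp
  hence "x \<noteq> x[0 := \<not> x ! 0]" by metis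
  thus "g0 x x = 0" by (simp add: g0_def)
qed

theorem mainTheorem1:
  fixes n :: nat
  assumes "n \<ge> 1"
  shows "(\<forall>h\<in>classical n. V n h \<le> 1 / (2 ^ n - 1))
       \<and> (\<exists>h\<in>classical n. V n h = 1 / (2 ^ n - 1))
       \<and> (SUP h\<in>classical n. V n h) = 1 / (2 ^ n - 1)
       \<and> (SUP h\<in>quantum n. V n h) = 1
       \<and> (SUP h\<in>quantum n. V n h) / (SUP h\<in>classical n. V n h) = 2 ^ n - 1"
proof -
  have N: "(2::real) ^ n - 1 > 0" using assms by (simp add: one_less_power)
  have c1: "\<forall>h\<in>classical n. V n h \<le> 1 / (2 ^ n - 1)"
  proof
    fix h assume "h \<in> classical n"
    then obtain g where g: "stochastic n g" and hg: "h = (\<lambda>S y. \<Sum>x\<in>omega n. g x y * (cmod (ket S x))\<^sup>2)"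
      unfolding classical_def by blast
    have "0 \<le> (\<Sum>x\<in>omega n. g x x)" using g by (intro sum_nonneg) (auto simp: stochastic_def)
    thus "V n h \<le> 1 / (2 ^ n - 1)" unfolding hg V_classical[OF assms g] using N
      by (simp add: divide_right_mono)
  qed
  have hc: "(\<lambda>S y. \<Sum>x\<in>omega n. g0 x y * (cmod (ket S x))\<^sup>2) \<in> classical n"
    unfolding classical_def using g0_stoch by blast
  have Vc: "V n (\<lambda>S y. \<Sum>x\<in>omega n. g0 x y * (cmod (ket S x))\<^sup>2) = 1 / (2 ^ n - 1)"
    unfolding V_classical[OF assms g0_stoch] using g0_diag assms by simp
  have c2: "\<exists>h\<in>classical n. V n h = 1 / (2 ^ n - 1)" using hc Vc by blast
  have c3: "(SUP h\<in>classical n. V n h) = 1 / (2 ^ n - 1)"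
  proof (rule cSup_eq_maximum)
    show "1 / (2 ^ n - 1) \<in> V n ` classical n" using image_eqI[where f="V n", OF Vc[symmetric] hc] .
  qed (use c1 in auto)
  have c4: "(SUP h\<in>quantum n. V n h) = 1"
  proof (rule cSup_eq_maximum)
    show "1 \<in> V n ` quantum n" using image_eqI[where f="V n", OF V_h0[OF assms, symmetric] h0_quantum] .
  qed (use V_quantum_le[OF _ assms] in auto)
  have c5: "(SUP h\<in>quantum n. V n h) / (SUP h\<in>classical n. V n h) = 2 ^ n - 1"
    unfolding c3 c4 by simp
  show ?thesis using c1 c2 c3 c4 c5 by blast
qed

end
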